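(* Let $\ell$ be a field of characteristic $p>0$ with $[\ell:\ell^p]=p^c$ and $H^{c+1}_p(\ell)\ne0$. Let $\alpha\in\Omega^q_\ell$ be such that for all $a\in\ell$ and all $b_1,\dots,b_{c-q}\in\ell^\times$, $\delta_1(a\,\alpha\wedge d\log b_1\wedge\dots\wedge d\log b_{c-q})=0$ in $H^{c+1}_p(\ell)$. Then $\alpha=0$.
   Context: $H^{c+1}_p(\ell)=H^1(\ell_{\text{ét}},\Omega^c_{\log})$, and $\delta_1:\Omega^c_\ell\to H^{c+1}_p(\ell)$ is the (surjective) coboundary map of the exact sequence of étale sheaves $0\to\Omega^c_{\log}\to\Omega^c\xrightarrow{C^{-1}-1}\Omega^c/d\Omega^{c-1}\to0$, where $C^{-1}$ is the inverse Cartier operator; $d\log b=db/b$. *)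

theory Defs
  imports Main "HOL-Computational_Algebra.Primes"
begin

(* A "term" (a, [b1,...,bq]) stands for the differential form  a db1 /\ ... /\ dbq.
   A formal sum is a finitely supported Z-valued function on terms. *)
type_synonym 'a fterm = "'a \<times> 'a list"
type_synonym 'a fsum = "'a fterm \<Rightarrow> int"

definition fs_zero :: "'a fsum" where "fs_zero = (\<lambda>_. 0)"
definition fs_gen :: "'a fterm \<Rightarrow> 'a fsum" where "fs_gen t = (\<lambda>s. if s = t then 1 else 0)"
definition fs_add :: "'a fsum \<Rightarrow> 'a fsum \<Rightarrow> 'a fsum" where "fs_add f g = (\<lambda>s. f s + g s)"
definition fs_neg :: "'a fsum \<Rightarrow> 'a fsum" where "fs_neg f = (\<lambda>s. - f s)"
definition fs_diff :: "'a fsum \<Rightarrow> 'a fsum \<Rightarrow> 'a fsum" where "fs_diff f g = (\<lambda>s. f s - g s)"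

definition fs_lin :: "('a fterm \<Rightarrow> 'b fsum) \<Rightarrow> 'a fsum \<Rightarrow> 'b fsum" where
  "fs_lin \<phi> f = (\<lambda>s. \<Sum>t\<in>{t. f t \<noteq> 0}. f t * \<phi> t s)"

inductive_set zspan :: "'a fsum set \<Rightarrow> 'a fsum set" for S where
  zspan_base: "f \<in> S \<Longrightarrow> f \<in> zspan S"
| zspan_zero: "fs_zero \<in> zspan S"
| zspan_add: "f \<in> zspan S \<Longrightarrow> g \<in> zspan S \<Longrightarrow> fs_add f g \<in> zspan S"
| zspan_neg: "f \<in> zspan S \<Longrightarrow> fs_neg f \<in> zspan S"

definition Form :: "nat \<Rightarrow> ('a::field) fsum set" where
  "Form q = {f. finite {t. f t \<noteq> 0} \<and> (\<forall>t. f t \<noteq> 0 \<longrightarrow> length (snd t) = q)}"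

(* defining relations of Omega^q = Lambda^q_l (Omega^1_{l/Z}) as an abelian group on the
   generators a db1/\.../\dbq : additivity in a, additivity and Leibniz rule in each slot,
   alternation and antisymmetry *)
definition Rel :: "nat \<Rightarrow> ('a::field) fsum set" where
  "Rel q =
     {fs_diff (fs_diff (fs_gen (a + a', bs)) (fs_gen (a, bs))) (fs_gen (a', bs))
        | a a' bs. length bs = q}
   \<union> {fs_diff (fs_diff (fs_gen (a, bs[i := b + b'])) (fs_gen (a, bs[i := b]))) (fs_gen (a, bs[i := b']))
        | a b b' bs i. length bs = q \<and> i < q}
   \<union> {fs_diff (fs_diff (fs_gen (a, bs[i := b * b'])) (fs_gen (a * b, bs[i := b']))) (fs_gen (a * b', bs[i := b]))
        | a b b' bs i. length bs = q \<and> i < q}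
   \<union> {fs_gen (a, bs) | a bs i j. length bs = q \<and> i < j \<and> j < q \<and> bs ! i = bs ! j}
   \<union> {fs_add (fs_gen (a, bs)) (fs_gen (a, bs[i := bs ! j, j := bs ! i]))
        | a bs i j. length bs = q \<and> i < j \<and> j < q}"

definition form_eq :: "nat \<Rightarrow> ('a::field) fsum \<Rightarrow> 'a fsum \<Rightarrow> bool" where
  "form_eq q f g \<longleftrightarrow> fs_diff f g \<in> zspan (Rel q)"

definition dform :: "('a::field) fsum \<Rightarrow> 'a fsum" where
  "dform = fs_lin (\<lambda>(a, bs). fs_gen (1, a # bs))"

definition cartier_inv :: "nat \<Rightarrow> ('a::field) fsum \<Rightarrow> 'a fsum" where
  "cartier_inv p = fs_lin (\<lambda>(a, bs). fs_gen (a ^ p * prod_list (map (\<lambda>b. b ^ (p - 1)) bs), bs))"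

(* delta_1(omega) = 0 in H^{c+1}_p(l) = coker(C^{-1}-1 : Omega^c -> Omega^c / d Omega^{c-1}) *)
definition H_zero :: "nat \<Rightarrow> nat \<Rightarrow> ('a::field) fsum \<Rightarrow> bool" where
  "H_zero p c \<omega> \<longleftrightarrow>
     (\<exists>\<eta>\<in>Form c. \<exists>\<beta>\<in>Form (c - 1). (c = 0 \<longrightarrow> \<beta> = fs_zero) \<and>
        form_eq c \<omega> (fs_add (fs_diff (cartier_inv p \<eta>) \<eta>) (dform \<beta>)))"

definition H_nonzero :: "nat \<Rightarrow> nat \<Rightarrow> 'a::field itself \<Rightarrow> bool" where
  "H_nonzero p c _ \<longleftrightarrow> (\<exists>\<omega>\<in>(Form c :: 'a fsum set). \<not> H_zero p c \<omega>)"

definition wedge_dlog :: "('a::field) \<Rightarrow> 'a fsum \<Rightarrow> 'a list \<Rightarrow> 'a fsum" where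
  "wedge_dlog a \<alpha> bs = fs_lin (\<lambda>(x, cs). fs_gen (a * x / prod_list bs, cs @ bs)) \<alpha>"

(* [l : l^p] = p^c : l has a basis of p^c elements as a vector space over l^p *)
definition frob_degree :: "nat \<Rightarrow> nat \<Rightarrow> 'a::field itself \<Rightarrow> bool" where
  "frob_degree p c _ \<longleftrightarrow>
     (\<exists>e :: 'a list. length e = p ^ c \<and>
        (\<forall>x :: 'a. \<exists>!y :: 'a list. length y = p ^ c \<and> x = (\<Sum>i<p ^ c. (y ! i) ^ p * e ! i)))"

end

theory Submission
  imports Defs "HOL-Library.Function_Algebras" "HOL-Computational_Algebra.Polynomial_Factorial"
begin

lemma fs_zero_eq: "fs_zero = 0" by (simp add: fs_zero_def zero_fun_def)
lemma fs_add_eq: "fs_add f g = f + g" by (simp add: fs_add_def plus_fun_def)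
lemma fs_neg_eq: "fs_neg f = - f" by (simp add: fs_neg_def fun_Compl_def)
lemma fs_diff_eq: "fs_diff f g = f - g" by (simp add: fs_diff_def fun_diff_def)

lemma zspan_zero': "0 \<in> zspan S" using zspan_zero[of S] by (simp add: fs_zero_eq)
lemma zspan_add': "f \<in> zspan S \<Longrightarrow> g \<in> zspan S \<Longrightarrow> f + g \<in> zspan S"
  using zspan_add[of f S g] by (simp add: fs_add_eq)
lemma zspan_neg': "f \<in> zspan S \<Longrightarrow> - f \<in> zspan S"
  using zspan_neg[of f S] by (simp add: fs_neg_eq)
lemma zspan_diff: "f \<in> zspan S \<Longrightarrow> g \<in> zspan S \<Longrightarrow> f - g \<in> zspan S"
  using zspan_add'[of f S "-g"] zspan_neg'[of g S] by simp
lemma zspan_neg_iff: "- f \<in> zspan S \<longleftrightarrow> f \<in> zspan S"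
  using zspan_neg'[of f S] zspan_neg'[of "-f" S] by auto
lemma zspan_sum: "(\<And>i. i \<in> A \<Longrightarrow> f i \<in> zspan S) \<Longrightarrow> sum f A \<in> zspan S"
  by (induction A rule: infinite_finite_induct) (auto intro: zspan_add' zspan_zero')
lemma zspan_mono: assumes "S \<subseteq> zspan T" "f \<in> zspan S" shows "f \<in> zspan T"
  using assms(2) by (induction f rule: zspan.induct) (use assms(1) in \<open>auto intro: zspan_add zspan_neg zspan_zero\<close>)
lemma zspan_sub: "S \<subseteq> T \<Longrightarrow> f \<in> zspan S \<Longrightarrow> f \<in> zspan T"
  by (metis zspan_mono zspan_base subsetI subsetD)

definition zsm :: "int \<Rightarrow> 'a fsum \<Rightarrow> 'a fsum" where "zsm n f = (\<lambda>s. n * f s)"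

lemma zspan_zsm: "f \<in> zspan S \<Longrightarrow> zsm n f \<in> zspan S"
proof -
  assume f: "f \<in> zspan S"
  have nat: "zsm (int k) f \<in> zspan S" for k
  proof (induction k)
    case 0 then show ?case using zspan_zero' by (simp add: zsm_def zero_fun_def)
  next
    case (Suc k)
    have "zsm (int (Suc k)) f = zsm (int k) f + f" by (simp add: zsm_def plus_fun_def algebra_simps)
    then show ?case using Suc zspan_add' f by metis
  qed
  show ?thesis
  proof (cases "n \<ge> 0")
    case True then show ?thesis using nat[of "nat n"] by simp
  next
    case False
    have "zsm n f = - zsm (int (nat (-n))) f" using False by (simp add: zsm_def fun_Compl_def)
    then show ?thesis using nat zspan_neg' by metis
  qed
qed

abbreviation G :: "'a \<Rightarrow> 'a list \<Rightarrow> 'a fsum" where "G a bs \<equiv> fs_gen (a, bs)"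

abbreviation Z :: "nat \<Rightarrow> ('a::field) fsum set" where "Z q \<equiv> zspan (Rel q)"

lemma R1: "length bs = q \<Longrightarrow> G (a + a') bs - G a bs - G a' bs \<in> Z q"
  unfolding fs_diff_eq[symmetric] by (rule zspan_base, unfold Rel_def Un_iff mem_Collect_eq, intro disjI1) blast
lemma R2: "length bs = q \<Longrightarrow> i < q \<Longrightarrow> G a (bs[i := b + b']) - G a (bs[i:=b]) - G a (bs[i:=b']) \<in> Z q"
  unfolding fs_diff_eq[symmetric] by (rule zspan_base, unfold Rel_def Un_iff mem_Collect_eq, rule disjI1, rule disjI1, rule disjI1, rule disjI2) blast
lemma R3: "length bs = q \<Longrightarrow> i < q \<Longrightarrow> G a (bs[i := b * b']) - G (a*b) (bs[i:=b']) - G (a*b') (bs[i:=b]) \<in> Z q"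
  unfolding fs_diff_eq[symmetric] by (rule zspan_base, unfold Rel_def Un_iff mem_Collect_eq, rule disjI1, rule disjI1, rule disjI2) blast
lemma R4: "length bs = q \<Longrightarrow> i < j \<Longrightarrow> j < q \<Longrightarrow> bs ! i = bs ! j \<Longrightarrow> G a bs \<in> Z q"
  by (rule zspan_base, unfold Rel_def Un_iff mem_Collect_eq, rule disjI1, rule disjI2) blast
lemma R5: "length bs = q \<Longrightarrow> i < j \<Longrightarrow> j < q \<Longrightarrow> G a bs + G a (bs[i := bs ! j, j := bs ! i]) \<in> Z q"
  unfolding fs_add_eq[symmetric] by (rule zspan_base, unfold Rel_def Un_iff mem_Collect_eq, rule disjI2) blast


lemma zs_eq: "x \<in> zspan S \<Longrightarrow> y = x \<Longrightarrow> y \<in> zspan S" by simp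

lemma L0: "length bs = q \<Longrightarrow> G (0::'a::field) bs \<in> Z q"
  using zspan_neg'[OF R1[of bs q 0 0]] by simp

lemma Lneg: "length bs = q \<Longrightarrow> G (-a::'a::field) bs + G a bs \<in> Z q"
proof -
  assume h: "length bs = q"
  have "G (-a) bs + G a bs = G 0 bs - (G (a + - a) bs - G a bs - G (-a) bs)" by simp
  then show ?thesis using zspan_diff[OF L0[OF h] R1[OF h, of a "-a"]] by (simp add: add.commute)
qed

lemma Lzsm_nat: "length bs = q \<Longrightarrow> G (of_nat n * a::'a::field) bs - zsm (int n) (G a bs) \<in> Z q"
proof (induction n)
  case 0 then show ?case using L0[of bs q] by (simp add: zsm_def zero_fun_def)
next
  case (Suc n)
  have e: "G (of_nat (Suc n) * a) bs - zsm (int (Suc n)) (G a bs) =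
      (G (of_nat n * a + a) bs - G (of_nat n * a) bs - G a bs) + (G (of_nat n * a) bs - zsm (int n) (G a bs))"
    by (simp add: zsm_def algebra_simps fun_eq_iff)
  show ?case unfolding e using zspan_add'[OF R1[OF Suc.prems] Suc.IH[OF Suc.prems]] .
qed

lemma Lpow: "length bs = q \<Longrightarrow> i < q \<Longrightarrow>
   G (a::'a::field) (bs[i := y ^ Suc n]) - zsm (int (Suc n)) (G (a * y ^ n) (bs[i := y])) \<in> Z q"
proof (induction n arbitrary: a)
  case 0 then show ?case using zspan_zero'[unfolded zero_fun_def] by (simp add: zsm_def)
next
  case (Suc n)
  have r: "G a (bs[i := y * y ^ Suc n]) - G (a*y) (bs[i:=y ^ Suc n]) - G (a*y ^ Suc n) (bs[i:=y]) \<in> Z q"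
    using R3[OF Suc.prems] .
  have ih: "G (a*y) (bs[i := y ^ Suc n]) - zsm (int (Suc n)) (G (a * y * y ^ n) (bs[i := y])) \<in> Z q"
    using Suc.IH[OF Suc.prems] .
  have e: "a * y * y ^ n = a * y ^ Suc n" by simp
  have eq: "G a (bs[i := y ^ Suc (Suc n)]) - zsm (int (Suc (Suc n))) (G (a * y ^ Suc n) (bs[i := y])) =
     (G a (bs[i := y * y ^ Suc n]) - G (a*y) (bs[i:=y ^ Suc n]) - G (a*y ^ Suc n) (bs[i:=y])) +
     (G (a*y) (bs[i := y ^ Suc n]) - zsm (int (Suc n)) (G (a * y ^ Suc n) (bs[i := y])))"
    by (simp add: zsm_def algebra_simps fun_eq_iff)
  show ?case by (subst eq) (rule zspan_add'[OF r ih[unfolded e]])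
qed

lemma Lfrob:
  assumes "prime p" "CHAR('a::field) = p" "length bs = q" "i < q"
  shows "G (a::'a) (bs[i := y ^ p]) \<in> Z q"
proof -
  have p: "p = Suc (p - 1)" using assms(1) prime_gt_0_nat by simp
  have l: "length (bs[i:=y]) = q" using assms by simp
  have A: "G a (bs[i := y ^ p]) - zsm (int p) (G (a * y ^ (p-1)) (bs[i := y])) \<in> Z q"
    using Lpow[OF assms(3,4), of a y "p - 1"] p by simp
  have B: "G (of_nat p * (a * y ^ (p-1))) (bs[i:=y]) - zsm (int p) (G (a * y ^ (p-1)) (bs[i := y])) \<in> Z q"
    using Lzsm_nat[OF l] .
  have "of_nat p = (0::'a)" using assms(2) of_nat_CHAR by metis
  then have B': "G 0 (bs[i:=y]) - zsm (int p) (G (a * y ^ (p-1)) (bs[i := y])) \<in> Z q" using B by simp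
  have "G a (bs[i := y ^ p]) = A' - B'' + G 0 (bs[i:=y])"
    if "A' = G a (bs[i := y ^ p]) - zsm (int p) (G (a * y ^ (p-1)) (bs[i := y]))"
       "B'' = G 0 (bs[i:=y]) - zsm (int p) (G (a * y ^ (p-1)) (bs[i := y]))" for A' B''
    using that by simp
  then show ?thesis using zspan_add'[OF zspan_diff[OF A B'] L0[OF l]] by simp
qed


inductive_set gen_by :: "nat \<Rightarrow> ('a::field) set \<Rightarrow> 'a set" for p T where
  gb_base: "t \<in> T \<Longrightarrow> t \<in> gen_by p T"
| gb_pow: "y ^ p \<in> gen_by p T"
| gb_add: "x \<in> gen_by p T \<Longrightarrow> y \<in> gen_by p T \<Longrightarrow> x + y \<in> gen_by p T"
| gb_mult: "x \<in> gen_by p T \<Longrightarrow> y \<in> gen_by p T \<Longrightarrow> x * y \<in> gen_by p T"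

definition Wslot :: "nat \<Rightarrow> ('a::field) set \<Rightarrow> 'a list \<Rightarrow> nat \<Rightarrow> 'a fsum set" where
  "Wslot q T bs i = zspan (Rel q \<union> {G a' (bs[i:=t]) | a' t. t \<in> T})"

lemma Z_Wslot: "f \<in> Z q \<Longrightarrow> f \<in> Wslot q T bs i"
  unfolding Wslot_def by (rule zspan_sub[of "Rel q"]) auto

lemma good:
  assumes "prime p" "CHAR('a::field) = p" "x \<in> gen_by p (T::'a set)"
  shows "length bs = q \<Longrightarrow> i < q \<Longrightarrow> G a (bs[i:=x]) \<in> Wslot q T bs i"
  using assms(3)
proof (induction x arbitrary: a rule: gen_by.induct)
  case (gb_base t)
  then show ?case unfolding Wslot_def by (intro zspan_base) blast
next
  case (gb_pow y)
  then show ?case using Lfrob[OF assms(1,2)] Z_Wslot by blast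
next
  case (gb_add x y)
  have e: "G a (bs[i := x + y]) = (G a (bs[i := x + y]) - G a (bs[i:=x]) - G a (bs[i:=y])) + G a (bs[i:=x]) + G a (bs[i:=y])"
    by simp
  show ?case unfolding Wslot_def
    by (subst e, intro zspan_add', unfold Wslot_def[symmetric])
       (auto intro: Z_Wslot R2 gb_add)
next
  case (gb_mult x y)
  have e: "G a (bs[i := x * y]) = (G a (bs[i := x * y]) - G (a*x) (bs[i:=y]) - G (a*y) (bs[i:=x])) + G (a*x) (bs[i:=y]) + G (a*y) (bs[i:=x])"
    by simp
  show ?case unfolding Wslot_def
    by (subst e, intro zspan_add', unfold Wslot_def[symmetric])
       (auto intro: Z_Wslot R3 gb_mult)
qed

definition Wall :: "nat \<Rightarrow> ('a::field) set \<Rightarrow> 'a fsum set" where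
  "Wall q T = zspan (Rel q \<union> {G a cs | a cs. length cs = q \<and> set cs \<subseteq> T})"

lemma all_in_Wall:
  assumes "prime p" "CHAR('a::field) = p" "gen_by p (T::'a set) = UNIV" "length bs = q"
  shows "G a bs \<in> Wall q T"
proof -
  have claim: "\<forall>a bs. length bs = q \<and> (\<forall>j<q-n. bs!j \<in> T) \<longrightarrow> G a bs \<in> Wall q T" if "n \<le> q" for n
    using that
  proof (induction n)
    case 0
    show ?case
    proof (intro allI impI)
      fix a bs assume h: "length bs = q \<and> (\<forall>j<q-0. bs!j \<in> T)"
      then have "set bs \<subseteq> T" by (auto simp: in_set_conv_nth)
      then show "G a bs \<in> Wall q T" unfolding Wall_def using h by (intro zspan_base) blast
    qed
  next
    case (Suc n)
    show ?case
    proof (intro allI impI)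
      fix a bs assume h: "length bs = q \<and> (\<forall>j<q - Suc n. bs!j \<in> T)"
      define i where "i = q - Suc n"
      have iq: "i < q" using Suc.prems i_def by simp
      have x: "bs ! i \<in> gen_by p T" using assms(3) by simp
      have "G a (bs[i := bs!i]) \<in> Wslot q T bs i" using good[OF assms(1,2) x] h iq by blast
      then have w: "G a bs \<in> Wslot q T bs i" by simp
      have sub: "Rel q \<union> {G a' (bs[i:=t]) | a' t. t \<in> T} \<subseteq> Wall q T"
      proof
        fix f assume "f \<in> Rel q \<union> {G a' (bs[i:=t]) | a' t. t \<in> T}"
        then consider "f \<in> Rel q" | a' t where "t \<in> T" "f = G a' (bs[i:=t])" by blast
        then show "f \<in> Wall q T"
        proof cases
          case 1 then show ?thesis unfolding Wall_def by (intro zspan_base) blast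
        next
          case 2
          have "\<forall>j<q - n. (bs[i:=t]) ! j \<in> T"
          proof (intro allI impI)
            fix j assume "j < q - n"
            then have "j < i \<or> j = i" using i_def Suc.prems by auto
            then show "(bs[i:=t]) ! j \<in> T" using h 2 iq i_def by (auto simp: nth_list_update)
          qed
          then show ?thesis using Suc.IH Suc.prems h 2 by simp
        qed
      qed
      show "G a bs \<in> Wall q T" using w unfolding Wslot_def using zspan_mono[OF sub[unfolded Wall_def]]
        unfolding Wall_def by blast
    qed
  qed
  show ?thesis using claim[of q] assms(4) by simp
qed


lemma Lnd: assumes "length cs = q" "\<not> distinct cs" shows "G (a::'a::field) cs \<in> Z q"
proof -
  obtain i j where ij: "i < length cs" "j < length cs" "i \<noteq> j" "cs!i = cs!j"
    using assms(2) by (auto simp: distinct_conv_nth)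
  show ?thesis
  proof (cases "i < j")
    case True then show ?thesis using R4[OF assms(1) True] ij assms(1) by simp
  next
    case False then have "j < i" using ij by simp
    then show ?thesis using R4[OF assms(1) \<open>j < i\<close>] ij assms(1) by simp
  qed
qed

lemma Lperm:
  assumes "length xs = q" "length ys = q" "distinct xs" "distinct ys" "set xs = set ys"
  shows "(\<forall>a. G (a::'a::field) xs - G a ys \<in> Z q) \<or> (\<forall>a. G (a::'a) xs + G a ys \<in> Z q)"
proof -
  have claim: "\<forall>xs. length xs = q \<and> distinct xs \<and> set xs = set ys \<and> take (q - m) xs = take (q - m) ys \<longrightarrow>
     (\<forall>a. G (a::'a) xs - G a ys \<in> Z q) \<or> (\<forall>a. G (a::'a) xs + G a ys \<in> Z q)" for m
  proof (induction m)
    case 0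
    show ?case
    proof (intro allI impI)
      fix xs :: "'a list" assume h: "length xs = q \<and> distinct xs \<and> set xs = set ys \<and> take (q - 0) xs = take (q - 0) ys"
      then have "xs = ys" using take_all[of xs q] take_all[of ys q] assms(2) by simp
      then show "(\<forall>a. G a xs - G a ys \<in> Z q) \<or> (\<forall>a. G a xs + G a ys \<in> Z q)" by (intro disjI1) (simp add: zspan_zero')
    qed
  next
    case (Suc m)
    show ?case
    proof (intro allI impI)
      fix xs :: "'a list" assume h: "length xs = q \<and> distinct xs \<and> set xs = set ys \<and> take (q - Suc m) xs = take (q - Suc m) ys"
      show "(\<forall>a. G a xs - G a ys \<in> Z q) \<or> (\<forall>a. G a xs + G a ys \<in> Z q)"
      proof (cases "m < q")
        case False
        then have "q - Suc m = q - m" by simp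
        then have "take (q - m) xs = take (q - m) ys" using h by simp
        then show ?thesis using Suc.IH[rule_format, of xs] h by blast
      next
        case True
        define i where "i = q - Suc m"
        have iq: "i < q" using True i_def by simp
        have tk: "q - m = Suc i" using True i_def by simp
        have pre: "\<forall>j<i. xs!j = ys!j" using h i_def
          by (metis nth_take)
        show ?thesis
        proof (cases "xs ! i = ys ! i")
          case True
          have "take (q - m) xs = take (q - m) ys" unfolding tk using h i_def True iq assms(2)
            by (simp add: take_Suc_conv_app_nth)
          then show ?thesis using Suc.IH[rule_format, of xs] h by blast
        next
          case False
          have "ys ! i \<in> set xs" using h iq assms(2) by auto
          then obtain j where j: "j < q" "xs ! j = ys ! i" using h by (metis in_set_conv_nth)
          have "\<not> j < i"
          proof
            assume "j < i" then have "ys ! j = ys ! i" using pre j by simp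
            then show False using \<open>j < i\<close> iq assms(2,4) by (simp add: nth_eq_iff_index_eq)
          qed
          moreover have "j \<noteq> i" using j False by auto
          ultimately have ij: "i < j" by simp
          define xs' where "xs' = xs[i := xs ! j, j := xs ! i]"
          have sw: "\<forall>a. G a xs + G a xs' \<in> Z q" using R5[of xs q i j] h ij j xs'_def by simp
          have l': "length xs' = q" using h xs'_def by simp
          have d': "distinct xs'" using h xs'_def iq j(1) by (simp add: distinct_swap)
          have s': "set xs' = set ys" using h xs'_def iq j(1) by (simp add: set_swap)
          have t': "take (q - m) xs' = take (q - m) ys"
          proof (rule nth_equalityI)
            show "length (take (q - m) xs') = length (take (q - m) ys)" using l' assms(2) by simp
            fix k assume "k < length (take (q - m) xs')"
            then have k: "k \<le> i" using tk l' by simp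
            show "take (q - m) xs' ! k = take (q - m) ys ! k"
            proof (cases "k = i")
              case True then show ?thesis using tk xs'_def h j iq ij by simp
            next
              case False then have "k < i" using k by simp
              then show ?thesis using tk xs'_def pre ij by simp
            qed
          qed
          have ih: "(\<forall>a. G a xs' - G a ys \<in> Z q) \<or> (\<forall>a. G a xs' + G a ys \<in> Z q)"
            using Suc.IH l' d' s' t' by blast
          then show ?thesis
          proof
            assume A: "\<forall>a. G a xs' - G a ys \<in> Z q"
            have "G a xs + G a ys = (G a xs + G a xs') - (G a xs' - G a ys)" for a by simp
            then show ?thesis using zspan_diff sw A by metis
          next
            assume A: "\<forall>a. G a xs' + G a ys \<in> Z q"
            have "G a xs - G a ys = (G a xs + G a xs') - (G a xs' + G a ys)" for a by simp
            then show ?thesis using zspan_diff sw A by metis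
          qed
        qed
      qed
    qed
  qed
  show ?thesis using claim[of q, rule_format, of xs] assms by simp
qed


definition fin :: "'a fsum \<Rightarrow> bool" where "fin f \<longleftrightarrow> finite {t. f t \<noteq> 0}"

lemma sum_fun_apply: "(sum f A) x = (\<Sum>a\<in>A. f a x)"
  by (induction A rule: infinite_finite_induct) (auto simp: zero_fun_def plus_fun_def)

lemma fin_gen: "fin (fs_gen t)" unfolding fin_def fs_gen_def by simp
lemma fin_zero: "fin 0" unfolding fin_def by (simp add: zero_fun_def)
lemma fin_add: "fin f \<Longrightarrow> fin g \<Longrightarrow> fin (f + g)"
  unfolding fin_def by (rule finite_subset[of _ "{t. f t \<noteq> 0} \<union> {t. g t \<noteq> 0}"]) (auto simp: plus_fun_def)
lemma fin_neg: "fin f \<Longrightarrow> fin (- f)" unfolding fin_def by (simp add: fun_Compl_def)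
lemma fin_diff: "fin f \<Longrightarrow> fin g \<Longrightarrow> fin (f - g)"
  using fin_add[of f "-g"] fin_neg[of g] by simp
lemma fin_zspan: assumes "\<And>r. r \<in> S \<Longrightarrow> fin r" "f \<in> zspan S" shows "fin f"
  using assms(2)
proof (induction f rule: zspan.induct)
  case (zspan_base f) then show ?case using assms(1) by blast
next
  case zspan_zero then show ?case unfolding fs_zero_eq by (rule fin_zero)
next
  case (zspan_add f g) then show ?case unfolding fs_add_eq by (intro fin_add)
next
  case (zspan_neg f) then show ?case unfolding fs_neg_eq by (intro fin_neg)
qed
lemma fin_Rel: "r \<in> Rel q \<Longrightarrow> fin r"
  unfolding Rel_def fs_diff_eq fs_add_eq by (auto intro!: fin_diff fin_gen fin_add)
lemma fin_Z: "f \<in> Z q \<Longrightarrow> fin f" using fin_zspan fin_Rel by blast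

lemma fs_lin_sup: "finite A \<Longrightarrow> {t. f t \<noteq> 0} \<subseteq> A \<Longrightarrow> fs_lin \<phi> f = (\<lambda>s. \<Sum>t\<in>A. f t * \<phi> t s)"
  unfolding fs_lin_def by (intro ext sum.mono_neutral_left) auto

lemma fs_lin_gen: "fs_lin \<phi> (fs_gen t) = \<phi> t"
proof -
  have "{s. fs_gen t s \<noteq> 0} = {t}" by (auto simp: fs_gen_def)
  then show ?thesis unfolding fs_lin_def by (simp add: fs_gen_def)
qed

lemma fs_lin_add: assumes "fin f" "fin g" shows "fs_lin \<phi> (f + g) = fs_lin \<phi> f + fs_lin \<phi> g"
proof -
  let ?A = "{t. f t \<noteq> 0} \<union> {t. g t \<noteq> 0}"
  have fA: "finite ?A" using assms unfolding fin_def by simp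
  have "fs_lin \<phi> (f + g) = (\<lambda>s. \<Sum>t\<in>?A. (f+g) t * \<phi> t s)" by (rule fs_lin_sup[OF fA]) (auto simp: plus_fun_def)
  moreover have "fs_lin \<phi> f = (\<lambda>s. \<Sum>t\<in>?A. f t * \<phi> t s)" by (rule fs_lin_sup[OF fA]) auto
  moreover have "fs_lin \<phi> g = (\<lambda>s. \<Sum>t\<in>?A. g t * \<phi> t s)" by (rule fs_lin_sup[OF fA]) auto
  ultimately show ?thesis by (simp add: plus_fun_def distrib_right sum.distrib)
qed

lemma fs_lin_neg: "fs_lin \<phi> (- f) = - fs_lin \<phi> f"
  unfolding fs_lin_def by (simp add: fun_Compl_def sum_negf)

lemma fs_lin_diff: "fin f \<Longrightarrow> fin g \<Longrightarrow> fs_lin \<phi> (f - g) = fs_lin \<phi> f - fs_lin \<phi> g"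
  using fs_lin_add[of f "-g" \<phi>] fs_lin_neg[of \<phi> g] fin_neg[of g] by simp

lemma fs_lin_zero: "fs_lin \<phi> 0 = 0" unfolding fs_lin_def by (rule ext) (simp add: zero_fun_def)

lemma fin_sum: "(\<And>i. i \<in> A \<Longrightarrow> fin (f i)) \<Longrightarrow> fin (sum f A)"
proof (induction A rule: infinite_finite_induct)
  case (infinite A) then show ?case by (simp only: sum.infinite[OF infinite.hyps] fin_zero)
next
  case empty then show ?case by (simp only: sum.empty fin_zero)
next
  case (insert x F)
  have e: "sum f (insert x F) = f x + sum f F" using insert.hyps by (rule sum.insert)
  show ?case unfolding e by (rule fin_add) (use insert in auto)
qed

lemma fs_lin_sum: "finite A \<Longrightarrow> (\<And>i. i \<in> A \<Longrightarrow> fin (f i)) \<Longrightarrow> fs_lin \<phi> (sum f A) = (\<Sum>i\<in>A. fs_lin \<phi> (f i))"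
proof (induction A rule: finite_induct)
  case empty then show ?case by (simp only: sum.empty fs_lin_zero)
next
  case (insert x F)
  have "fin (sum f F)" using insert fin_sum by blast
  moreover have "fin (f x)" using insert by simp
  ultimately have a: "fs_lin \<phi> (f x + sum f F) = fs_lin \<phi> (f x) + fs_lin \<phi> (sum f F)"
    by (intro fs_lin_add)
  have e1: "sum f (insert x F) = f x + sum f F" using insert.hyps by (rule sum.insert)
  have e2: "(\<Sum>i\<in>insert x F. fs_lin \<phi> (f i)) = fs_lin \<phi> (f x) + (\<Sum>i\<in>F. fs_lin \<phi> (f i))"
    using insert.hyps by (rule sum.insert)
  have ih: "fs_lin \<phi> (sum f F) = (\<Sum>i\<in>F. fs_lin \<phi> (f i))" using insert by simp
  show ?case unfolding e1 e2 a ih ..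
qed

lemma fs_lin_zspan:
  assumes "\<And>r. r \<in> S \<Longrightarrow> fin r" "\<And>r. r \<in> S \<Longrightarrow> fs_lin \<phi> r \<in> zspan S'"
  shows "f \<in> zspan S \<Longrightarrow> fs_lin \<phi> f \<in> zspan S'"
proof (induction f rule: zspan.induct)
  case (zspan_base f) then show ?case using assms by simp
next
  case zspan_zero then show ?case unfolding fs_zero_eq fs_lin_zero by (rule zspan_zero')
next
  case (zspan_add f g)
  have "fin f" "fin g" using zspan_add fin_zspan assms(1) by blast+
  then show ?case unfolding fs_add_eq fs_lin_add[OF \<open>fin f\<close> \<open>fin g\<close>] by (intro zspan_add' zspan_add.IH)
next
  case (zspan_neg f) then show ?case unfolding fs_neg_eq fs_lin_neg by (intro zspan_neg')
qed

lemma form_decomp: "fin f \<Longrightarrow> f = (\<Sum>t\<in>{t. f t \<noteq> 0}. zsm (f t) (fs_gen t))"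
proof (rule ext)
  fix x assume "fin f"
  have "(\<Sum>t\<in>{t. f t \<noteq> 0}. zsm (f t) (fs_gen t)) x = (\<Sum>t\<in>{t. f t \<noteq> 0}. if t = x then f t else 0)"
    by (simp add: sum_fun_apply zsm_def fs_gen_def) (rule sum.cong, auto)
  also have "\<dots> = f x" using \<open>fin f\<close> unfolding fin_def by (simp add: sum.delta')
  finally show "f x = (\<Sum>t\<in>{t. f t \<noteq> 0}. zsm (f t) (fs_gen t)) x" by simp
qed

lemma fin_in_zspan: "fin f \<Longrightarrow> (\<And>t. f t \<noteq> 0 \<Longrightarrow> fs_gen t \<in> zspan S) \<Longrightarrow> f \<in> zspan S"
  by (subst form_decomp, assumption) (auto intro!: zspan_sum zspan_zsm)

lemma top_collapse:
  assumes "distinct ts" "length ts = c" "\<omega> \<in> Wall c (set ts)"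
  shows "\<exists>g. \<omega> - G (g::'a::field) ts \<in> Z c"
  using assms(3) unfolding Wall_def
proof (induction \<omega> rule: zspan.induct)
  case (zspan_base f)
  then consider "f \<in> Rel c" | a cs where "length cs = c" "set cs \<subseteq> set ts" "f = G a cs" by blast
  then show ?case
  proof cases
    case 1 then show ?thesis using zspan_diff[OF zspan.zspan_base L0[OF assms(2)]] by blast
  next
    case 2
    show ?thesis
    proof (cases "distinct cs")
      case False
      then show ?thesis using zspan_diff[OF Lnd[OF 2(1) False] L0[OF assms(2)]] 2 by blast
    next
      case True
      have "card (set cs) = c" using True 2 distinct_card by metis
      moreover have "card (set ts) = c" using assms distinct_card by metis
      ultimately have "set cs = set ts" using 2(2) by (simp add: card_subset_eq)
      then have P: "(\<forall>a. G a cs - G a ts \<in> Z c) \<or> (\<forall>a. G a cs + G a ts \<in> Z c)"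
        using Lperm[OF 2(1) assms(2) True assms(1)] by blast
      then show ?thesis
      proof
        assume "\<forall>a. G a cs - G a ts \<in> Z c" then show ?thesis using 2 by blast
      next
        assume A: "\<forall>a. G a cs + G a ts \<in> Z c"
        have eqn: "G a cs - G (-a) ts = (G a cs + G a ts) - (G (-a) ts + G a ts)" by simp
        have "G a cs - G (-a) ts \<in> Z c" unfolding eqn by (rule zspan_diff[OF A[rule_format] Lneg[OF assms(2)]])
        then show ?thesis using 2(3) by blast
      qed
    qed
  qed
next
  case zspan_zero
  have e: "fs_zero - G 0 ts = - G 0 ts" by (simp only: fs_zero_eq diff_0)
  have "fs_zero - G 0 ts \<in> Z c" unfolding e by (rule zspan_neg'[OF L0[OF assms(2)]])
  then show ?case by blast
next
  case (zspan_add f g)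
  then obtain g1 g2 where g: "f - G g1 ts \<in> Z c" "g - G g2 ts \<in> Z c" by blast
  have eqn: "fs_add f g - G (g1 + g2) ts = (f - G g1 ts) + (g - G g2 ts) - (G (g1 + g2) ts - G g1 ts - G g2 ts)"
    by (simp add: fs_add_eq)
  have "fs_add f g - G (g1 + g2) ts \<in> Z c" unfolding eqn by (rule zspan_diff[OF zspan_add'[OF g] R1[OF assms(2)]])
  then show ?case by blast
next
  case (zspan_neg f)
  then obtain g1 where g: "f - G g1 ts \<in> Z c" by blast
  have eqn: "fs_neg f - G (-g1) ts = - (f - G g1 ts) - (G (-g1) ts + G g1 ts)"
    by (simp add: fs_neg_eq)
  have "fs_neg f - G (-g1) ts \<in> Z c" unfolding eqn by (rule zspan_diff[OF zspan_neg'[OF g] Lneg[OF assms(2)]])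
  then show ?case by blast
qed

lemma top_zero:
  assumes "length ts < c" "\<omega> \<in> Wall c (set (ts::'a::field list))"
  shows "\<omega> \<in> Z c"
  using assms(2) unfolding Wall_def
proof (induction \<omega> rule: zspan.induct)
  case (zspan_base f)
  then consider "f \<in> Rel c" | a cs where "length cs = c" "set cs \<subseteq> set ts" "f = G a cs" by blast
  then show ?case
  proof cases
    case 1 then show ?thesis by (rule zspan.zspan_base)
  next
    case 2
    have "card (set cs) \<le> card (set ts)" using 2 by (simp add: card_mono)
    also have "\<dots> \<le> length ts" by (rule card_length)
    finally have "\<not> distinct cs" using 2 assms(1) distinct_card by fastforce
    then show ?thesis using Lnd[OF 2(1)] 2(3) by blast
  qed
qed (auto intro: zspan.intros)


definition Iset :: "nat \<Rightarrow> nat \<Rightarrow> nat set set" where "Iset k q = {I. I \<subseteq> {..<k} \<and> card I = q}"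
definition tl_of :: "'a list \<Rightarrow> nat set \<Rightarrow> 'a list" where "tl_of ts I = map (nth ts) (sorted_list_of_set I)"
definition Csum :: "('a::field) list \<Rightarrow> nat \<Rightarrow> (nat set \<Rightarrow> 'a) \<Rightarrow> 'a fsum" where
  "Csum ts q f = (\<Sum>I\<in>Iset (length ts) q. G (f I) (tl_of ts I))"

lemma finite_Iset: "finite (Iset k q)"
  unfolding Iset_def by (rule finite_subset[of _ "Pow {..<k}"]) auto

lemma Iset_fin: "I \<in> Iset k q \<Longrightarrow> finite I"
  unfolding Iset_def using finite_subset by blast

lemma len_tl: "I \<in> Iset k q \<Longrightarrow> length (tl_of ts I) = q"
  unfolding tl_of_def Iset_def using Iset_fin[of I k q] by (simp add: Iset_def)

lemma set_tl: "finite I \<Longrightarrow> set (tl_of ts I) = (nth ts) ` I"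
  unfolding tl_of_def by simp

lemma distinct_tl: "distinct ts \<Longrightarrow> I \<subseteq> {..<length ts} \<Longrightarrow> distinct (tl_of ts I)"
  unfolding tl_of_def
proof (rule distinct_map[THEN iffD2], intro conjI)
  assume "I \<subseteq> {..<length ts}"
  then have "finite I" using finite_subset by blast
  then show "distinct (sorted_list_of_set I)" by simp
  assume "distinct ts"
  show "inj_on (nth ts) (set (sorted_list_of_set I))"
    using \<open>finite I\<close> \<open>distinct ts\<close> \<open>I \<subseteq> {..<length ts}\<close>
    by (auto intro!: inj_on_nth)
qed

lemma Csum_Z: assumes "\<And>I. I \<in> Iset (length ts) q \<Longrightarrow> f I = 0" shows "Csum ts q f \<in> Z q"
  unfolding Csum_def by (rule zspan_sum, subst assms, assumption, rule L0, erule len_tl)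

lemma Csum_add:
  "Csum ts q (\<lambda>I. f1 I + f2 I) - Csum ts q f1 - Csum ts q f2 \<in> Z q"
proof -
  have "Csum ts q (\<lambda>I. f1 I + f2 I) - Csum ts q f1 - Csum ts q f2 =
     (\<Sum>I\<in>Iset (length ts) q. G (f1 I + f2 I) (tl_of ts I) - G (f1 I) (tl_of ts I) - G (f2 I) (tl_of ts I))"
    unfolding Csum_def by (simp only: sum_subtractf)
  also have "\<dots> \<in> Z q" by (rule zspan_sum, rule R1, erule len_tl)
  finally show ?thesis .
qed

lemma Csum_neg:
  "Csum ts q (\<lambda>I. - f I) + Csum ts q f \<in> Z q"
proof -
  have "Csum ts q (\<lambda>I. - f I) + Csum ts q f =
     (\<Sum>I\<in>Iset (length ts) q. G (- f I) (tl_of ts I) + G (f I) (tl_of ts I))"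
    unfolding Csum_def by (simp only: sum.distrib)
  also have "\<dots> \<in> Z q" by (rule zspan_sum, rule Lneg, erule len_tl)
  finally show ?thesis .
qed

lemma Csum_single:
  assumes "I \<in> Iset (length ts) q"
  shows "Csum ts q (\<lambda>J. if J = I then a else 0) - G a (tl_of ts I) \<in> Z q"
proof -
  have "Csum ts q (\<lambda>J. if J = I then a else 0) = G (if I = I then a else 0) (tl_of ts I) + (\<Sum>J\<in>Iset (length ts) q - {I}. G (if J = I then a else 0) (tl_of ts J))"
    unfolding Csum_def by (rule sum.remove[OF finite_Iset assms])
  then have "Csum ts q (\<lambda>J. if J = I then a else 0) = G a (tl_of ts I) + (\<Sum>J\<in>Iset (length ts) q - {I}. G (if J = I then a else 0) (tl_of ts J))"
    by (simp only: if_P[OF refl])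
  also have "(\<Sum>J\<in>Iset (length ts) q - {I}. G (if J = I then a else 0) (tl_of ts J)) = (\<Sum>J\<in>Iset (length ts) q - {I}. G 0 (tl_of ts J))"
    by (rule sum.cong) auto
  finally have e: "Csum ts q (\<lambda>J. if J = I then a else 0) - G a (tl_of ts I) = (\<Sum>J\<in>Iset (length ts) q - {I}. G 0 (tl_of ts J))"
    by (simp only: add_diff_cancel_left')
  show ?thesis unfolding e by (rule zspan_sum, rule L0, rule len_tl, blast)
qed

lemma canon:
  assumes "distinct ts" "\<omega> \<in> Wall q (set ts)"
  shows "\<exists>f. \<omega> - Csum ts q (f::nat set \<Rightarrow> 'a::field) \<in> Z q"
  using assms(2) unfolding Wall_def
proof (induction \<omega> rule: zspan.induct)
  case (zspan_base \<omega>)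
  then consider "\<omega> \<in> Rel q" | a cs where "length cs = q" "set cs \<subseteq> set ts" "\<omega> = G a cs" by blast
  then show ?case
  proof cases
    case 1
    have "\<omega> - Csum ts q (\<lambda>_. 0) \<in> Z q" by (rule zspan_diff[OF zspan.zspan_base[OF 1] Csum_Z]) simp
    then show ?thesis by blast
  next
    case 2
    show ?thesis
    proof (cases "distinct cs")
      case False
      have "\<omega> - Csum ts q (\<lambda>_. 0) \<in> Z q" unfolding 2(3)
        by (rule zspan_diff[OF Lnd[OF 2(1) False] Csum_Z]) simp
      then show ?thesis by blast
    next
      case True
      define I where "I = {i. i < length ts \<and> ts ! i \<in> set cs}"
      have Isub: "I \<subseteq> {..<length ts}" unfolding I_def by auto
      have finI: "finite I" using Isub finite_subset by blast
      have img: "(nth ts) ` I = set cs"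
      proof
        show "(nth ts) ` I \<subseteq> set cs" unfolding I_def by auto
        show "set cs \<subseteq> (nth ts) ` I"
        proof
          fix x assume x: "x \<in> set cs"
          then have "x \<in> set ts" using 2 by auto
          then obtain i where "i < length ts" "ts ! i = x" by (auto simp: in_set_conv_nth)
          then show "x \<in> (nth ts) ` I" unfolding I_def using x by auto
        qed
      qed
      have "inj_on (nth ts) I" using assms(1) Isub by (auto intro!: inj_on_nth)
      then have "card I = card (set cs)" using img card_image by metis
      also have "\<dots> = q" using True 2(1) distinct_card by metis
      finally have II: "I \<in> Iset (length ts) q" unfolding Iset_def using Isub by simp
      have st: "set (tl_of ts I) = set cs" using set_tl[OF finI, of ts] img by simp
      have P: "(\<forall>a. G a cs - G a (tl_of ts I) \<in> Z q) \<or> (\<forall>a. G a cs + G a (tl_of ts I) \<in> Z q)"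
        by (rule Lperm[OF 2(1) len_tl[OF II] True distinct_tl[OF assms(1) Isub] st[symmetric]])
      then show ?thesis
      proof
        assume A: "\<forall>a. G a cs - G a (tl_of ts I) \<in> Z q"
        have eqn: "\<omega> - Csum ts q (\<lambda>J. if J = I then a else 0) = (G a cs - G a (tl_of ts I)) - (Csum ts q (\<lambda>J. if J = I then a else 0) - G a (tl_of ts I))"
          using 2(3) by simp
        have "\<omega> - Csum ts q (\<lambda>J. if J = I then a else 0) \<in> Z q" unfolding eqn
          by (rule zspan_diff[OF A[rule_format] Csum_single[OF II]])
        then show ?thesis by blast
      next
        assume A: "\<forall>a. G a cs + G a (tl_of ts I) \<in> Z q"
        have eqn: "\<omega> - Csum ts q (\<lambda>J. if J = I then -a else 0) = (G a cs + G a (tl_of ts I)) - (G (-a) (tl_of ts I) + G a (tl_of ts I)) - (Csum ts q (\<lambda>J. if J = I then -a else 0) - G (-a) (tl_of ts I))"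
          using 2(3) by simp
        have "\<omega> - Csum ts q (\<lambda>J. if J = I then -a else 0) \<in> Z q" unfolding eqn
          by (rule zspan_diff[OF zspan_diff[OF A[rule_format] Lneg[OF len_tl[OF II]]] Csum_single[OF II]])
        then show ?thesis by blast
      qed
    qed
  qed
next
  case zspan_zero
  have e: "fs_zero - Csum ts q (\<lambda>_. 0) = - Csum ts q (\<lambda>_. 0)" by (simp only: fs_zero_eq diff_0)
  have "fs_zero - Csum ts q (\<lambda>_. 0) \<in> Z q" unfolding e by (rule zspan_neg'[OF Csum_Z]) simp
  then show ?case by blast
next
  case (zspan_add f g)
  then obtain f1 f2 where g: "f - Csum ts q f1 \<in> Z q" "g - Csum ts q f2 \<in> Z q" by blast
  have eqn: "fs_add f g - Csum ts q (\<lambda>I. f1 I + f2 I) = (f - Csum ts q f1) + (g - Csum ts q f2) - (Csum ts q (\<lambda>I. f1 I + f2 I) - Csum ts q f1 - Csum ts q f2)"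
    by (simp add: fs_add_eq)
  have "fs_add f g - Csum ts q (\<lambda>I. f1 I + f2 I) \<in> Z q" unfolding eqn by (rule zspan_diff[OF zspan_add'[OF g] Csum_add])
  then show ?case by blast
next
  case (zspan_neg f)
  then obtain f1 where g: "f - Csum ts q f1 \<in> Z q" by blast
  have eqn: "fs_neg f - Csum ts q (\<lambda>I. - f1 I) = - (f - Csum ts q f1) - (Csum ts q (\<lambda>I. - f1 I) + Csum ts q f1)"
    by (simp add: fs_neg_eq)
  have "fs_neg f - Csum ts q (\<lambda>I. - f1 I) \<in> Z q" unfolding eqn by (rule zspan_diff[OF zspan_neg'[OF g] Csum_neg])
  then show ?case by blast
qed


definition psi :: "('a::field) \<Rightarrow> 'a list \<Rightarrow> 'a fterm \<Rightarrow> 'a fsum" where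
  "psi a J = (\<lambda>(x, cs). fs_gen (a * x / prod_list J, cs @ J))"

lemma wedge_psi: "wedge_dlog a \<alpha> J = fs_lin (psi a J) \<alpha>"
  unfolding wedge_dlog_def psi_def ..

lemma psi_app: "psi a J (x, cs) = G (a * x / prod_list J) (cs @ J)"
  unfolding psi_def by simp

lemma lin3: "fs_lin \<phi> (G x1 l1 - G x2 l2 - G x3 l3) = \<phi> (x1, l1) - \<phi> (x2, l2) - \<phi> (x3, l3)"
  by (simp only: fs_lin_diff fin_gen fin_diff fs_lin_gen)

lemma lin2: "fs_lin \<phi> (G x1 l1 + G x2 l2) = \<phi> (x1, l1) + \<phi> (x2, l2)"
  by (simp only: fs_lin_add fin_gen fs_lin_gen)

lemma wedge_Rel:
  assumes "length J = c - q" "q \<le> c" "r \<in> Rel q"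
  shows "fs_lin (psi a J) r \<in> Z c"
proof -
  let ?P = "prod_list J"
  from assms(3)[unfolded Rel_def fs_diff_eq fs_add_eq] show ?thesis
  proof (elim UnE, goal_cases)
    case 1
    then obtain a1 a2 bs where c1: "length bs = q" "r = G (a1 + a2) bs - G a1 bs - G a2 bs" by blast
    have L: "length (bs @ J) = c" using c1 assms by simp
    have e: "a * (a1 + a2) / ?P = a * a1 / ?P + a * a2 / ?P" by (simp add: distrib_left add_divide_distrib)
    show ?thesis unfolding c1(2) lin3 psi_app e by (rule R1[OF L])
  next
    case 2
    then obtain a1 b b' bs i where c2: "length bs = q" "i < q" "r = G a1 (bs[i := b + b']) - G a1 (bs[i := b]) - G a1 (bs[i := b'])" by blast
    have L: "length (bs @ J) = c" using c2 assms by simp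
    have ic: "i < c" using c2 assms by simp
    have u: "\<And>y. bs[i := y] @ J = (bs @ J)[i := y]" using c2 by (simp add: list_update_append1)
    show ?thesis unfolding c2(3) lin3 psi_app u by (rule R2[OF L ic])
  next
    case 3
    then obtain a1 b b' bs i where c3: "length bs = q" "i < q" "r = G a1 (bs[i := b * b']) - G (a1 * b) (bs[i := b']) - G (a1 * b') (bs[i := b])" by blast
    have L: "length (bs @ J) = c" using c3 assms by simp
    have ic: "i < c" using c3 assms by simp
    have u: "\<And>y. bs[i := y] @ J = (bs @ J)[i := y]" using c3 by (simp add: list_update_append1)
    have e1: "a * (a1 * b) / ?P = a * a1 / ?P * b" by simp
    have e2: "a * (a1 * b') / ?P = a * a1 / ?P * b'" by simp
    show ?thesis unfolding c3(3) lin3 psi_app u e1 e2 by (rule R3[OF L ic])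
  next
    case 4
    then obtain a1 bs i j where c4: "length bs = q" "i < j" "j < q" "bs ! i = bs ! j" "r = G a1 bs" by blast
    have L: "length (bs @ J) = c" using c4 assms by simp
    have jc: "j < c" using c4 assms by simp
    have n: "(bs @ J) ! i = (bs @ J) ! j" using c4 by (simp add: nth_append)
    show ?thesis unfolding c4(5) fs_lin_gen psi_app by (rule R4[OF L c4(2) jc n])
  next
    case 5
    then obtain a1 bs i j where c5: "length bs = q" "i < j" "j < q" "r = G a1 bs + G a1 (bs[i := bs ! j, j := bs ! i])" by blast
    have L: "length (bs @ J) = c" using c5 assms by simp
    have jc: "j < c" using c5 assms by simp
    have u: "bs[i := bs ! j, j := bs ! i] @ J = (bs @ J)[i := (bs @ J) ! j, j := (bs @ J) ! i]"
      using c5 by (simp add: list_update_append1 nth_append)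
    show ?thesis unfolding c5(4) lin2 psi_app u by (rule R5[OF L c5(2) jc])
  qed
qed

lemma wedge_Z:
  assumes "length J = c - q" "q \<le> c" "f \<in> Z q"
  shows "fs_lin (psi a J) f \<in> Z c"
  by (rule fs_lin_zspan[OF fin_Rel wedge_Rel[OF assms(1,2)] assms(3)])


lemma coeff_lin_pow: "coeff ([:a, 1:] ^ Suc n) n = of_nat (Suc n) * (a::'a::comm_ring_1)"
proof (induction n)
  case 0 then show ?case by simp
next
  case (Suc n)
  have "[:a, 1:] ^ Suc (Suc n) = [:a, 1:] ^ Suc n * [:a, 1:]" by (rule power_Suc2)
  also have "\<dots> = smult a ([:a, 1:] ^ Suc n) + pCons 0 ([:a, 1:] ^ Suc n)" by simp
  finally have "coeff ([:a, 1:] ^ Suc (Suc n)) (Suc n) = a * coeff ([:a, 1:] ^ Suc n) (Suc n) + coeff ([:a, 1:] ^ Suc n) n"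
    by simp
  also have "\<dots> = a + of_nat (Suc n) * a" using Suc coeff_linear_power[of a "Suc n"] by simp
  finally show ?case by (simp add: algebra_simps)
qed

lemma dvd_prime_elem_pow:
  fixes P :: "'a::{idom,algebraic_semidom}"
  assumes "prime_elem P"
  shows "g dvd P ^ n \<Longrightarrow> \<exists>k u. k \<le> n \<and> is_unit u \<and> g = u * P ^ k"
proof (induction n arbitrary: g)
  case 0
  then show ?case by (intro exI[of _ 0] exI[of _ g]) simp
next
  case (Suc n)
  have P0: "P \<noteq> 0" using assms by (simp add: prime_elem_def)
  show ?case
  proof (cases "P dvd g")
    case True
    then obtain g' where g': "g = P * g'" by (auto elim: dvdE)
    have "P * g' dvd P * P ^ n" using Suc.prems g' by simp
    then have "g' dvd P ^ n" using P0 by simp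
    from Suc.IH[OF this] obtain k u where "k \<le> n" "is_unit u" "g' = u * P ^ k" by blast
    then show ?thesis using g' by (intro exI[of _ "Suc k"] exI[of _ u]) (simp add: algebra_simps)
  next
    case False
    obtain k where k: "P * P ^ n = g * k" using Suc.prems by (auto elim: dvdE)
    then have "P dvd g * k" by (metis dvd_triv_left)
    then have "P dvd k" using False assms prime_elem_dvd_mult_iff by blast
    then obtain k' where k': "k = P * k'" by (auto elim: dvdE)
    have "P * P ^ n = P * (g * k')" using k k' by (simp add: algebra_simps)
    then have "P ^ n = g * k'" using P0 by simp
    then have "g dvd P ^ n" by simp
    from Suc.IH[OF this] obtain k u where "k \<le> n" "is_unit u" "g = u * P ^ k" by blast
    then show ?thesis by (intro exI[of _ k] exI[of _ u]) simp
  qed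
qed

lemma frob_poly:
  fixes t :: "'a::field"
  assumes "prime p" "CHAR('a) = p"
  shows "[:-t, 1:] ^ p = monom 1 p - [:t ^ p:]"
proof -
  have pc: "prime CHAR('a poly)" using assms by simp
  have e: "[:-t, 1:] = [:0, 1:] + [:-t:]" by simp
  have q: "p = CHAR('a poly)" using assms by simp
  have A: "([:0, 1:] + [:-t:]) ^ p = [:0, 1:] ^ p + [:-t:] ^ p"
    by (rule freshmans_dream[where x="[:0,1:]::'a poly" and y="[:-t:]" and n=p, OF pc q])
  have "[:-t, 1:] ^ p = [:0, 1:] ^ p + [:-t:] ^ p" unfolding e by (rule A)
  also have "[:-t:] ^ p = [:(-t) ^ p:]" by (rule poly_const_pow)
  also have "(-t) ^ p = - (t ^ p)" using minus_power_prime_CHAR[of p t] assms by simp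
  also have "[:0, 1:] ^ p = (monom 1 p :: 'a poly)" by (simp add: monom_altdef)
  finally show ?thesis by simp
qed

lemma degree_p:
  fixes S :: "'a::field set" and t :: 'a
  assumes pr: "prime p" "CHAR('a) = p"
    and S0: "0 \<in> S" and S1: "1 \<in> S"
    and Sadd: "\<And>x y. x \<in> S \<Longrightarrow> y \<in> S \<Longrightarrow> x + y \<in> S"
    and Sneg: "\<And>x. x \<in> S \<Longrightarrow> - x \<in> S"
    and Smul: "\<And>x y. x \<in> S \<Longrightarrow> y \<in> S \<Longrightarrow> x * y \<in> S"
    and Sinv: "\<And>x. x \<in> S \<Longrightarrow> inverse x \<in> S"
    and Spow: "\<And>x. x ^ p \<in> S"
    and t: "t \<notin> S"
    and h: "\<forall>i. coeff h i \<in> S" "degree h < p" "poly h t = 0"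
  shows "h = 0"
proof -
  have p0: "p > 0" using pr(1) prime_gt_0_nat by blast
  have Sdiff: "x \<in> S \<Longrightarrow> y \<in> S \<Longrightarrow> x - y \<in> S" for x y using Sadd[OF _ Sneg, of x y] by simp
  define P where "P m \<longleftrightarrow> (\<exists>h. (\<forall>i. coeff h i \<in> S) \<and> degree h < m \<and> poly h t = t ^ m)" for m
  have Pp: "P p" unfolding P_def
    by (rule exI[of _ "[:t ^ p:]"]) (use p0 Spow S0 in \<open>auto simp: coeff_pCons split: nat.split\<close>)
  define m where "m = (LEAST m. P m)"
  have Pm: "P m" unfolding m_def by (rule LeastI[of P p, OF Pp])
  have mp: "m \<le> p" unfolding m_def by (rule Least_le[of P p, OF Pp])
  have m0: "m \<noteq> 0" using Pm unfolding P_def by auto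
  have indep: "g = 0" if g: "\<forall>i. coeff g i \<in> S" "degree g < m" "poly g t = 0" for g
  proof (rule ccontr)
    assume gnz: "g \<noteq> 0"
    define d where "d = degree g"
    define c where "c = coeff g d"
    have cnz: "c \<noteq> 0" using gnz unfolding c_def d_def by simp
    have cS: "c \<in> S" using g unfolding c_def by simp
    show False
    proof (cases "d = 0")
      case True
      then have "g = [:c:]" unfolding c_def d_def by (metis degree_0_id)
      then show False using g(3) cnz by simp
    next
      case False
      define g' where "g' = smult (- inverse c) (g - monom c d)"
      have g'S: "\<forall>i. coeff g' i \<in> S" unfolding g'_def
        using g(1) cS S0 by (auto simp: coeff_monom intro!: Smul Sneg Sinv Sdiff)
      have "degree g' \<le> d - 1"
      proof (rule degree_le, intro allI impI)
        fix i assume "d - 1 < i"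
        then have "i \<ge> d" by simp
        then show "coeff g' i = 0" unfolding g'_def c_def
          by (cases "i = d") (auto simp: coeff_monom d_def coeff_eq_0)
      qed
      then have dg': "degree g' < d" using False by simp
      have "poly g' t = - inverse c * (poly g t - c * t ^ d)" unfolding g'_def by (simp add: poly_monom)
      also have "\<dots> = t ^ d" using g(3) cnz by (simp add: field_simps)
      finally have "P d" unfolding P_def using g'S dg' by blast
      moreover have "d < m" using g(2) d_def by simp
      ultimately show False unfolding m_def using not_less_Least by blast
    qed
  qed
  obtain h0 where h0: "\<forall>i. coeff h0 i \<in> S" "degree h0 < m" "poly h0 t = t ^ m" using Pm unfolding P_def by blast
  define g where "g = monom 1 m - h0"
  have cg: "coeff g i = (if i = m then 1 else 0) - coeff h0 i" for i unfolding g_def by (simp add: coeff_monom)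
  have gS: "\<forall>i. coeff g i \<in> S" using h0(1) S0 S1 by (auto simp: cg intro!: Sdiff Sneg)
  have gm: "coeff g m = 1" using h0(2) by (simp add: cg coeff_eq_0)
  have gbig: "coeff g i = 0" if "i > m" for i using h0(2) that by (simp add: cg coeff_eq_0)
  have dg: "degree g = m"
  proof (rule antisym)
    show "degree g \<le> m" using gbig by (intro degree_le) auto
    show "m \<le> degree g" using gm by (intro le_degree) simp
  qed
  have lg: "lead_coeff g = 1" using dg gm by simp
  have pg: "poly g t = 0" unfolding g_def using h0(3) by (simp add: poly_monom)
  have red: "\<exists>r. (\<forall>i. coeff r i \<in> S) \<and> degree r < m \<and> g dvd (monom 1 n - r)" for n
  proof (induction n)
    case 0
    show ?case by (rule exI[of _ 1]) (use m0 S0 S1 in \<open>auto simp: coeff_1\<close>)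
  next
    case (Suc n)
    then obtain r where r: "\<forall>i. coeff r i \<in> S" "degree r < m" "g dvd (monom 1 n - r)" by blast
    define c0 where "c0 = coeff r (m - 1)"
    define r' where "r' = pCons 0 r - smult c0 g"
    have c0S: "c0 \<in> S" using r(1) c0_def by simp
    have r'S: "\<forall>i. coeff r' i \<in> S" unfolding r'_def
      using r(1) gS c0S S0 by (auto simp: coeff_pCons split: nat.split intro!: Sdiff Smul Sneg)
    have "degree r' \<le> m - 1"
    proof (rule degree_le, intro allI impI)
      fix i assume i: "m - 1 < i"
      then obtain j where j: "i = Suc j" "j \<ge> m - 1" by (cases i) auto
      have ci: "coeff (pCons 0 r) i = coeff r j" using j(1) by simp
      show "coeff r' i = 0"
      proof (cases "i = m")
        case True
        then have "j = m - 1" using j by simp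
        then show ?thesis unfolding r'_def c0_def using ci j True gm by simp
      next
        case False
        then have "i > m" using i m0 by simp
        then have "coeff r j = 0" using j r(2) m0 by (intro coeff_eq_0) simp
        then show ?thesis unfolding r'_def using j gbig[OF \<open>i > m\<close>] by simp
      qed
    qed
    then have dr': "degree r' < m" using m0 by simp
    have e: "monom 1 (Suc n) - r' = [:0, 1:] * (monom 1 n - r) + smult c0 g"
      unfolding r'_def by (simp add: monom_Suc algebra_simps)
    have "g dvd monom 1 (Suc n) - r'" unfolding e
      using r(3) by (intro dvd_add dvd_mult dvd_smult dvd_refl)
    then show ?case using r'S dr' by blast
  qed
  obtain r where r: "\<forall>i. coeff r i \<in> S" "degree r < m" "g dvd (monom 1 p - r)" using red[of p] by blast
  from r(3) obtain kk where kk: "monom 1 p - r = g * kk" by (elim dvdE)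
  have "poly (monom 1 p - r) t = 0" unfolding kk using pg by simp
  then have prt: "poly r t = t ^ p" by (simp add: poly_monom)
  have "r - [:t ^ p:] = 0"
  proof (rule indep)
    show "\<forall>i. coeff (r - [:t ^ p:]) i \<in> S" using r(1) Spow S0 by (auto simp: coeff_pCons split: nat.split intro!: Sdiff)
    have "degree (r - [:t ^ p:]) \<le> max (degree r) (degree [:t ^ p:])" by (rule degree_diff_le_max)
    then show "degree (r - [:t ^ p:]) < m" using r(2) m0 by simp
    show "poly (r - [:t ^ p:]) t = 0" using prt by simp
  qed
  then have "r = [:t ^ p:]" by simp
  then have "g dvd [:-t, 1:] ^ p" using r(3) frob_poly[OF pr] by simp
  moreover have prm: "prime_elem [:-t, 1::'a:]"
    using prime_elem_linear_field_poly[of 1 "-t"] by simp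
  ultimately obtain m' u where mu: "m' \<le> p" "is_unit u" "g = u * [:-t, 1:] ^ m'"
    using dvd_prime_elem_pow by blast
  then obtain cu where cu: "u = [:cu:]" by (auto simp: is_unit_poly_iff)
  have "lead_coeff g = cu" using mu(3) cu by (simp add: lead_coeff_mult lead_coeff_power)
  then have "cu = 1" using lg by simp
  then have gpow: "g = [:-t, 1:] ^ m'" using mu(3) cu by simp
  then have "m' = m" using dg by (simp add: degree_linear_power)
  with gpow have gpow': "g = [:-t, 1:] ^ m" by simp
  have "coeff g (m - 1) = of_nat m * (- t)"
    using coeff_lin_pow[of "-t" "m - 1"] m0 gpow' by simp
  moreover have "coeff g (m - 1) \<in> S" using gS by simp
  ultimately have mt: "of_nat m * (- t) \<in> S" by simp
  have "m = p"
  proof (rule ccontr)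
    assume "m \<noteq> p"
    then have mlt: "m < p" using mp by simp
    have "of_nat m \<noteq> (0::'a)"
    proof
      assume "of_nat m = (0::'a)"
      then have "p dvd m" using pr(2) of_nat_eq_0_iff_char_dvd by metis
      then show False using mlt m0 by (simp add: nat_dvd_not_less)
    qed
    have ofS: "of_nat k \<in> S" for k by (induction k) (use S0 S1 Sadd in auto)
    have "t = - (inverse (of_nat m) * (of_nat m * (- t)))" using \<open>of_nat m \<noteq> 0\<close> by (simp add: field_simps)
    moreover have "- (inverse (of_nat m) * (of_nat m * (- t))) \<in> S" by (rule Sneg, rule Smul, rule Sinv, rule ofS, rule mt)
    ultimately show False using t by metis
  qed
  then show ?thesis using indep h by simp
qed


locale frob =
  fixes p :: nat and sc :: "'a::field \<Rightarrow> 'a \<Rightarrow> 'a"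
  assumes prime_p: "prime p" and charp: "CHAR('a) = p" and sc_eq: "\<And>y x. sc y x = y ^ p * x"
begin

lemma p_pos: "p > 0" using prime_p prime_gt_0_nat by blast
lemma p_ge2: "p \<ge> 2" using prime_p prime_ge_2_nat by blast

lemma frob_add: "(x + y) ^ p = x ^ p + (y::'a) ^ p"
proof -
  have a: "prime CHAR('a)" using prime_p charp by simp
  have b: "p = CHAR('a)" using charp by simp
  show ?thesis by (rule freshmans_dream[where x=x and y=y and n=p, OF a b])
qed

sublocale vector_space sc
proof
  fix a b :: 'a and x y :: 'a
  show "sc a (x + y) = sc a x + sc a y" unfolding sc_eq by (rule distrib_left)
  show "sc (a + b) x = sc a x + sc b x" unfolding sc_eq frob_add by (rule distrib_right)
  show "sc a (sc b x) = sc (a * b) x" unfolding sc_eq by (simp only: power_mult_distrib mult.assoc)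
  show "sc 1 x = x" unfolding sc_eq by simp
qed

primrec Mon :: "'a list \<Rightarrow> 'a set" where
  "Mon [] = {1}"
| "Mon (t # ts) = (\<lambda>(j, m). t ^ j * m) ` ({..<p} \<times> Mon ts)"

lemma Mon_finite: "finite (Mon ts)" by (induction ts) auto

lemma one_Mon: "1 \<in> Mon ts"
proof (induction ts)
  case Nil then show ?case by simp
next
  case (Cons t ts)
  have "(\<lambda>(j, m). t ^ j * m) (0, 1) \<in> Mon (t # ts)" using Cons p_pos by (simp only: Mon.simps) (intro imageI, simp)
  then show ?case by simp
qed

lemma Mon_mono: "Mon ts \<subseteq> Mon (t # ts)"
proof
  fix m assume "m \<in> Mon ts"
  then have "(\<lambda>(j, m). t ^ j * m) (0, m) \<in> Mon (t # ts)" using p_pos by (simp only: Mon.simps) (intro imageI, simp)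
  then show "m \<in> Mon (t # ts)" by simp
qed

lemma set_Mon: "set ts \<subseteq> Mon ts"
proof (induction ts)
  case Nil then show ?case by simp
next
  case (Cons t ts)
  have "(\<lambda>(j, m). t ^ j * m) (1, 1) \<in> Mon (t # ts)" using p_ge2 one_Mon[of ts] by (simp only: Mon.simps) (intro imageI, simp)
  then have tM: "t \<in> Mon (t # ts)" by simp
  have sub: "set ts \<subseteq> Mon (t # ts)" using Cons.IH Mon_mono[of ts t] by (rule subset_trans)
  show ?case unfolding list.set(2) using tM sub by (rule insert_subsetI)
qed

abbreviation SS :: "'a list \<Rightarrow> 'a set" where "SS ts \<equiv> span (Mon ts)"

lemma pow_SS: "x ^ p \<in> SS ts"
proof -
  have "sc x 1 \<in> SS ts" by (intro span_scale span_base one_Mon)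
  then show ?thesis by (simp add: sc_eq)
qed

lemma subspace_lmult: "subspace {z. a * z \<in> span B}"
  unfolding subspace_def
proof (intro conjI ballI allI)
  show "0 \<in> {z. a * z \<in> span B}" by (simp add: span_zero)
next
  fix x y assume x: "x \<in> {z. a * z \<in> span B}" and y: "y \<in> {z. a * z \<in> span B}"
  have "a * x + a * y \<in> span B" using x y by (intro span_add) simp_all
  then show "x + y \<in> {z. a * z \<in> span B}" by (simp add: distrib_left)
next
  fix c x assume x: "x \<in> {z. a * z \<in> span B}"
  have e: "a * sc c x = sc c (a * x)" unfolding sc_eq by (rule mult.left_commute)
  have "sc c (a * x) \<in> span B" using x by (intro span_scale) simp
  then show "sc c x \<in> {z. a * z \<in> span B}" using e by simp
qed

lemma shift_SS: assumes "i < p" "z \<in> SS ts" shows "t ^ i * z \<in> SS (t # ts)"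
proof (rule span_induct[where P="\<lambda>z. t ^ i * z \<in> SS (t # ts)", OF assms(2) subspace_lmult])
  fix x assume x: "x \<in> Mon ts"
  have "(\<lambda>(j, m). t ^ j * m) (i, x) \<in> Mon (t # ts)" using assms(1) x by (simp only: Mon.simps) (intro imageI, simp)
  then show "t ^ i * x \<in> SS (t # ts)" by (intro span_base) simp
qed

lemma Mon_mult: "m \<in> Mon ts \<Longrightarrow> m' \<in> Mon ts \<Longrightarrow> m * m' \<in> SS ts"
proof (induction ts arbitrary: m m')
  case Nil then show ?case by (simp add: span_base)
next
  case (Cons t ts)
  obtain j a where ja: "j < p" "a \<in> Mon ts" "m = t ^ j * a" using Cons.prems(1) by auto
  obtain j' b where jb: "j' < p" "b \<in> Mon ts" "m' = t ^ j' * b" using Cons.prems(2) by auto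
  have ab: "a * b \<in> SS ts" using Cons.IH ja jb by blast
  have e: "m * m' = t ^ (j + j') * (a * b)" using ja jb by (simp add: power_add algebra_simps)
  show ?case
  proof (cases "j + j' < p")
    case True then show ?thesis unfolding e using shift_SS ab by blast
  next
    case False
    define r where "r = j + j' - p"
    have rp: "r < p" using ja jb r_def by simp
    have jj: "j + j' = p + r" using False r_def by simp
    have "t ^ (j + j') * (a * b) = sc t (t ^ r * (a * b))" unfolding jj sc_eq power_add by (rule mult.assoc)
    moreover have "sc t (t ^ r * (a * b)) \<in> SS (t # ts)" by (rule span_scale[OF shift_SS[OF rp ab]])
    ultimately show ?thesis unfolding e by simp
  qed
qed

lemma mult_SS: assumes "x \<in> SS ts" "y \<in> SS ts" shows "x * y \<in> SS ts"
proof -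
  have base: "m * y \<in> SS ts" if "m \<in> Mon ts" "y \<in> SS ts" for m y
  proof (rule span_induct[where P="\<lambda>y. m * y \<in> SS ts", OF that(2) subspace_lmult])
    fix x assume "x \<in> Mon ts" then show "m * x \<in> SS ts" using Mon_mult that(1) by blast
  qed
  have "y * x \<in> SS ts"
  proof (rule span_induct[where P="\<lambda>x. y * x \<in> SS ts", OF assms(1) subspace_lmult])
    fix m assume "m \<in> Mon ts" then show "y * m \<in> SS ts" using base[of m y] assms(2) by (simp add: mult.commute)
  qed
  then show ?thesis by (simp add: mult.commute)
qed

lemma inv_SS: assumes "x \<in> SS ts" shows "inverse x \<in> SS ts"
proof (cases "x = 0")
  case True then show ?thesis by (simp add: span_zero)
next
  case False
  have pw: "x ^ n \<in> SS ts" for n by (induction n) (auto intro: mult_SS assms span_base one_Mon)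
  have pp: "p = Suc (p - 1)" using p_pos by simp
  have xp: "x ^ p = x * x ^ (p - 1)" using pp power_Suc by metis
  have "sc (inverse x) (x ^ (p - 1)) = inverse (x * x ^ (p - 1)) * x ^ (p - 1)"
    unfolding sc_eq power_inverse xp ..
  also have "\<dots> = inverse x" using False by (simp add: field_simps)
  finally show ?thesis using span_scale[OF pw] by metis
qed

lemma SS_gen_by: "x \<in> SS ts \<Longrightarrow> x \<in> gen_by p (set ts)"
proof -
  have M: "Mon ts' \<subseteq> gen_by p (set ts)" if "set ts' \<subseteq> set ts" for ts'
    using that
  proof (induction ts')
    case Nil
    have "1 ^ p \<in> gen_by p (set ts)" by (rule gb_pow)
    then show ?case by simp
  next
    case (Cons t ts')
    have t: "t \<in> gen_by p (set ts)" using Cons by (auto intro: gb_base)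
    have pw: "t ^ j \<in> gen_by p (set ts)" for j
    proof (induction j)
      case 0 have "1 ^ p \<in> gen_by p (set ts)" by (rule gb_pow) then show ?case by simp
    next
      case (Suc j) then show ?case using gb_mult[OF t Suc] by simp
    qed
    show ?case using Cons pw by (auto intro: gb_mult)
  qed
  assume xS: "x \<in> SS ts"
  have z0: "(0::'a) = 0 ^ p" using p_pos by simp
  have z: "0 \<in> gen_by p (set ts)" by (subst z0) (rule gb_pow)
  have sub: "subspace {x. x \<in> gen_by p (set ts)}"
    unfolding subspace_def sc_eq mem_Collect_eq using z by (blast intro: gb_add gb_mult gb_pow)
  show ?thesis
  proof (rule span_induct[where P="\<lambda>x. x \<in> gen_by p (set ts)", OF xS sub])
    fix m assume "m \<in> Mon ts" then show "m \<in> gen_by p (set ts)" using M by blast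
  qed
qed

end


context frob
begin

lemma step_indep:
  assumes ind: "independent (Mon ts)" and cd: "card (Mon ts) = p ^ length ts" and t: "t \<notin> SS ts"
  shows "independent (Mon (t # ts)) \<and> card (Mon (t # ts)) = p ^ length (t # ts)"
proof -
  define A where "A = {..<p} \<times> Mon ts"
  define f where "f = (\<lambda>(j::nat, m::'a). t ^ j * m)"
  have MA: "Mon (t # ts) = f ` A" unfolding A_def f_def by simp
  have finA: "finite A" unfolding A_def using Mon_finite by simp
  have FI: "\<forall>x\<in>A. u x = 0" if U: "(\<Sum>x\<in>A. sc (u x) (f x)) = 0" for u
  proof -
    define s where "s j = (\<Sum>m\<in>Mon ts. sc (u (j, m)) m)" for j
    have sS: "s j \<in> SS ts" for j unfolding s_def by (intro span_sum span_scale span_base)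
    have "(\<Sum>x\<in>A. sc (u x) (f x)) = (\<Sum>j<p. \<Sum>m\<in>Mon ts. sc (u (j, m)) (f (j, m)))"
      unfolding A_def by (subst sum.cartesian_product) (intro sum.cong refl, auto)
    also have "\<dots> = (\<Sum>j<p. s j * t ^ j)"
      unfolding s_def sum_distrib_right by (intro sum.cong refl) (simp add: f_def sc_eq algebra_simps)
    finally have sum0: "(\<Sum>j<p. s j * t ^ j) = 0" using U by simp
    define h where "h = (\<Sum>j<p. monom (s j) j)"
    have ch: "coeff h i = (if i < p then s i else 0)" for i
      unfolding h_def coeff_sum coeff_monom by (simp add: sum.delta)
    have "degree h \<le> p - 1" by (rule degree_le) (auto simp: ch)
    then have dh: "degree h < p" using p_pos by simp
    have ph: "poly h t = 0" unfolding h_def poly_sum poly_monom using sum0 by simp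
    have h0: "h = 0"
    proof (rule degree_p[OF prime_p charp, of "SS ts" t h])
      show "0 \<in> SS ts" by (rule span_zero)
      show "1 \<in> SS ts" by (intro span_base one_Mon)
      show "\<And>x y. x \<in> SS ts \<Longrightarrow> y \<in> SS ts \<Longrightarrow> x + y \<in> SS ts" by (rule span_add)
      show "\<And>x. x \<in> SS ts \<Longrightarrow> - x \<in> SS ts" by (rule span_neg)
      show "\<And>x y. x \<in> SS ts \<Longrightarrow> y \<in> SS ts \<Longrightarrow> x * y \<in> SS ts" by (rule mult_SS)
      show "\<And>x. x \<in> SS ts \<Longrightarrow> inverse x \<in> SS ts" by (rule inv_SS)
      show "\<And>x. x ^ p \<in> SS ts" by (rule pow_SS)
      show "t \<notin> SS ts" by (rule t)
      show "\<forall>i. coeff h i \<in> SS ts" by (auto simp: ch span_zero sS)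
      show "degree h < p" by (rule dh)
      show "poly h t = 0" by (rule ph)
    qed
    show ?thesis
    proof
      fix x assume "x \<in> A"
      then obtain j m where x: "x = (j, m)" "j < p" "m \<in> Mon ts" unfolding A_def by auto
      have "s j = 0" using ch[of j] h0 x(2) by simp
      then have "(\<Sum>m\<in>Mon ts. sc (u (j, m)) m) = 0" unfolding s_def .
      then have "\<forall>m\<in>Mon ts. u (j, m) = 0" using ind dependent_finite[OF Mon_finite, of ts] by auto
      then show "u x = 0" using x by simp
    qed
  qed
  have inj: "inj_on f A"
  proof (rule inj_onI, rule ccontr)
    fix x y assume xA: "x \<in> A" and yA: "y \<in> A" and fe: "f x = f y" and ne: "x \<noteq> y"
    define u where "u z = (if z = x then 1 else if z = y then -1 else (0::'a))" for z
    have m1: "(-1::'a) ^ p = -1" using minus_power_prime_CHAR[of p "1::'a"] charp prime_p by simp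
    have "(\<Sum>z\<in>A. sc (u z) (f z)) = (\<Sum>z\<in>{x, y}. sc (u z) (f z))"
      by (rule sum.mono_neutral_right) (use finA xA yA in \<open>auto simp: u_def sc_eq p_pos\<close>)
    also have "\<dots> = sc (u x) (f x) + sc (u y) (f y)" using ne by simp
    also have "\<dots> = 0" using ne fe m1 by (simp add: u_def sc_eq)
    finally have "\<forall>z\<in>A. u z = 0" using FI by blast
    then show False using xA unfolding u_def by (metis one_neq_zero)
  qed
  have cardM: "card (Mon (t # ts)) = p ^ length (t # ts)"
  proof -
    have "card (Mon (t # ts)) = card A" unfolding MA by (rule card_image[OF inj])
    also have "\<dots> = p * card (Mon ts)" unfolding A_def by (simp add: card_cartesian_product)
    finally show ?thesis using cd by simp
  qed
  have "\<not> dependent (f ` A)"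
  proof
    assume "dependent (f ` A)"
    then obtain v where v: "\<exists>w\<in>f ` A. v w \<noteq> 0" "(\<Sum>w\<in>f ` A. sc (v w) w) = 0"
      using dependent_finite[of "f ` A"] finA by auto
    have "(\<Sum>x\<in>A. sc (v (f x)) (f x)) = 0" using v(2) sum.reindex[OF inj, of "\<lambda>w. sc (v w) w"] by simp
    then have "\<forall>x\<in>A. v (f x) = 0" using FI[of "\<lambda>x. v (f x)"] by simp
    then show False using v(1) by auto
  qed
  then show ?thesis using MA cardM by simp
qed

lemma chain:
  "(\<exists>ts. length ts = n \<and> distinct ts \<and> (\<forall>t\<in>set ts. t \<noteq> 0) \<and> independent (Mon ts) \<and> card (Mon ts) = p ^ n)
   \<or> (\<exists>ts. length ts < n \<and> distinct ts \<and> (\<forall>t\<in>set ts. t \<noteq> 0) \<and> SS ts = UNIV)"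
proof (induction n)
  case 0
  have "independent {1::'a}" by (rule independent_insertI, simp, rule independent_empty)
  then show ?case by (intro disjI1 exI[of _ "[]"]) simp
next
  case (Suc n)
  then show ?case
  proof
    assume "\<exists>ts. length ts = n \<and> distinct ts \<and> (\<forall>t\<in>set ts. t \<noteq> 0) \<and> independent (Mon ts) \<and> card (Mon ts) = p ^ n"
    then obtain ts where ts: "length ts = n" "distinct ts" "\<forall>t\<in>set ts. t \<noteq> 0" "independent (Mon ts)" "card (Mon ts) = p ^ n"
      by blast
    show ?thesis
    proof (cases "SS ts = UNIV")
      case True then show ?thesis using ts by (intro disjI2 exI[of _ ts]) simp
    next
      case False
      then obtain t where t: "t \<notin> SS ts" by blast
      have "t \<notin> set ts" using t set_Mon[of ts] span_base by blast
      moreover have "t \<noteq> 0" using t span_zero by blast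
      moreover have "independent (Mon (t # ts)) \<and> card (Mon (t # ts)) = p ^ length (t # ts)"
        using step_indep[OF ts(4)] ts(1,5) t by simp
      ultimately show ?thesis using ts by (intro disjI1 exI[of _ "t # ts"]) simp
    qed
  next
    assume "\<exists>ts. length ts < n \<and> distinct ts \<and> (\<forall>t\<in>set ts. t \<noteq> 0) \<and> SS ts = UNIV"
    then show ?thesis by (meson less_SucI)
  qed
qed

lemma exists_gen:
  assumes "frob_degree p c TYPE('a)"
  shows "\<exists>ts::'a list. length ts \<le> c \<and> distinct ts \<and> (\<forall>t\<in>set ts. t \<noteq> 0) \<and> gen_by p (set ts) = UNIV"
proof -
  obtain e :: "'a list" where e: "length e = p ^ c"
    "\<forall>x. \<exists>!y. length y = p ^ c \<and> x = (\<Sum>i<p ^ c. (y ! i) ^ p * e ! i)"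
    using assms unfolding frob_degree_def by blast
  have spanE: "x \<in> span (set e)" for x
  proof -
    obtain y where y: "x = (\<Sum>i<p ^ c. (y ! i) ^ p * e ! i)" using e(2) by blast
    have "(\<Sum>i<p ^ c. sc (y ! i) (e ! i)) \<in> span (set e)"
      using e(1) by (intro span_sum span_scale span_base) simp
    then show ?thesis using y by (simp add: sc_eq)
  qed
  from chain[of "Suc c"] show ?thesis
  proof
    assume "\<exists>ts. length ts = Suc c \<and> distinct ts \<and> (\<forall>t\<in>set ts. t \<noteq> 0) \<and> independent (Mon ts) \<and> card (Mon ts) = p ^ Suc c"
    then obtain ts where ts: "independent (Mon ts)" "card (Mon ts) = p ^ Suc c" by blast
    have "card (Mon ts) \<le> card (set e)"
      using independent_span_bound[OF _ ts(1), of "set e"] spanE by blast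
    also have "\<dots> \<le> p ^ c" using card_length[of e] e(1) by simp
    finally have "p ^ Suc c \<le> p ^ c" using ts(2) by simp
    moreover have "p ^ c < p ^ Suc c" using p_ge2 by simp
    ultimately show ?thesis by simp
  next
    assume "\<exists>ts. length ts < Suc c \<and> distinct ts \<and> (\<forall>t\<in>set ts. t \<noteq> 0) \<and> SS ts = UNIV"
    then obtain ts where ts: "length ts < Suc c" "distinct ts" "\<forall>t\<in>set ts. t \<noteq> 0" "SS ts = UNIV" by blast
    have "gen_by p (set ts) = UNIV" using SS_gen_by ts(4) by blast
    then show ?thesis using ts by (intro exI[of _ ts]) simp
  qed
qed

end

lemma exists_gen':
  assumes "prime p" "CHAR('a::field) = p" "frob_degree p c TYPE('a)"
  shows "\<exists>ts::'a list. length ts \<le> c \<and> distinct ts \<and> (\<forall>t\<in>set ts. t \<noteq> 0) \<and> gen_by p (set ts) = UNIV"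
proof -
  interpret frob p "\<lambda>y x. y ^ p * (x::'a)" by unfold_locales (use assms in simp_all)
  show ?thesis by (rule exists_gen[OF assms(3)])
qed


lemma H_zero_eq:
  assumes "\<omega> - \<omega>' \<in> Z c" "H_zero p c \<omega>'"
  shows "H_zero p c (\<omega>::'a::field fsum)"
proof -
  obtain \<eta> \<beta> where hb: "\<eta> \<in> Form c" "\<beta> \<in> Form (c - 1)" "c = 0 \<longrightarrow> \<beta> = fs_zero"
    "\<omega>' - fs_add (fs_diff (cartier_inv p \<eta>) \<eta>) (dform \<beta>) \<in> Z c"
    using assms(2) unfolding H_zero_def form_eq_def fs_diff_eq[of \<omega>'] by blast
  let ?X = "fs_add (fs_diff (cartier_inv p \<eta>) \<eta>) (dform \<beta>)"
  have e: "\<omega> - ?X = (\<omega> - \<omega>') + (\<omega>' - ?X)" by simp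
  have "\<omega> - ?X \<in> Z c" unfolding e by (rule zspan_add'[OF assms(1) hb(4)])
  then show ?thesis unfolding H_zero_def form_eq_def using hb(1-3) by (auto simp only: fs_diff_eq)
qed

lemma zero_Form: "fs_zero \<in> Form q" unfolding Form_def fs_zero_def by simp

lemma H_zero_Z:
  assumes "\<omega> \<in> Z c"
  shows "H_zero p c (\<omega>::'a::field fsum)"
proof -
  have c0: "cartier_inv p 0 = (0::'a fsum)" unfolding cartier_inv_def by (rule fs_lin_zero)
  have d0: "dform 0 = (0::'a fsum)" unfolding dform_def by (rule fs_lin_zero)
  have X: "fs_add (fs_diff (cartier_inv p fs_zero) fs_zero) (dform fs_zero) = (0::'a fsum)"
    unfolding fs_add_eq fs_diff_eq fs_zero_eq c0 d0 by simp
  have "\<omega> - fs_add (fs_diff (cartier_inv p fs_zero) fs_zero) (dform fs_zero) \<in> Z c"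
    unfolding X using assms by simp
  then show ?thesis unfolding H_zero_def form_eq_def fs_diff_eq using zero_Form by blast
qed

lemma Form_fin: "\<omega> \<in> Form q \<Longrightarrow> fin \<omega>" unfolding Form_def fin_def by simp

lemma Form_Wall:
  assumes "prime p" "CHAR('a::field) = p" "gen_by p (T::'a set) = UNIV" "\<omega> \<in> Form q"
  shows "\<omega> \<in> Wall q T"
  unfolding Wall_def
proof (rule fin_in_zspan[OF Form_fin[OF assms(4)]])
  fix t assume "\<omega> t \<noteq> 0"
  then have "length (snd t) = q" using assms(4) unfolding Form_def by blast
  then have "G (fst t) (snd t) \<in> Wall q T" by (rule all_in_Wall[OF assms(1-3)])
  then show "fs_gen t \<in> zspan (Rel q \<union> {G a cs |a cs. length cs = q \<and> set cs \<subseteq> T})"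
    unfolding Wall_def by simp
qed


theorem lemma4p3:
  fixes p c q :: nat and \<alpha> :: "('a::field) fsum"
  assumes "prime p" and "CHAR('a) = p"
    and "frob_degree p c TYPE('a)"
    and "H_nonzero p c TYPE('a)"
    and "q \<le> c"
    and "\<alpha> \<in> Form q"
    and "\<forall>(a::'a) bs. length bs = c - q \<and> (\<forall>b\<in>set bs. b \<noteq> 0)
            \<longrightarrow> H_zero p c (wedge_dlog a \<alpha> bs)"
  shows "form_eq q \<alpha> fs_zero"
proof -
  obtain ts :: "'a list" where ts: "length ts \<le> c" "distinct ts" "\<forall>t\<in>set ts. t \<noteq> 0" "gen_by p (set ts) = UNIV"
    using exists_gen'[OF assms(1,2,3)] by blast
  obtain \<omega>0 :: "'a fsum" where w0: "\<omega>0 \<in> Form c" "\<not> H_zero p c \<omega>0"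
    using assms(4) unfolding H_nonzero_def by blast
  have w0W: "\<omega>0 \<in> Wall c (set ts)" by (rule Form_Wall[OF assms(1,2) ts(4) w0(1)])
  have kc: "length ts = c"
  proof (rule ccontr)
    assume "length ts \<noteq> c" then have "length ts < c" using ts(1) by simp
    then have "\<omega>0 \<in> Z c" using top_zero w0W by blast
    then show False using H_zero_Z w0(2) by blast
  qed
  have aW: "\<alpha> \<in> Wall q (set ts)" by (rule Form_Wall[OF assms(1,2) ts(4) assms(6)])
  obtain f where f: "\<alpha> - Csum ts q f \<in> Z q" using canon[OF ts(2) aW] by blast
  show ?thesis
  proof (cases "\<forall>I\<in>Iset c q. f I = 0")
    case True
    have "Csum ts q f \<in> Z q" by (rule Csum_Z) (use True kc in auto)
    then have "(\<alpha> - Csum ts q f) + Csum ts q f \<in> Z q" using zspan_add'[OF f] by blast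
    then have "\<alpha> \<in> Z q" by simp
    then show ?thesis unfolding form_eq_def fs_diff_eq fs_zero_eq by simp
  next
    case False
    then obtain I0 where I0: "I0 \<in> Iset c q" "f I0 \<noteq> 0" by blast
    define K where "K = {..<c} - I0"
    define J where "J = tl_of ts K"
    define P where "P = prod_list J"
    have I0sub: "I0 \<subseteq> {..<c}" "card I0 = q" using I0 unfolding Iset_def by auto
    have finI0: "finite I0" using I0sub finite_subset by blast
    have I0sub': "I0 \<subseteq> {..<length ts}" using I0sub kc by simp
    have Ksub: "K \<subseteq> {..<length ts}" unfolding K_def kc by auto
    have finK: "finite K" unfolding K_def by simp
    have cardK: "card K = c - q" unfolding K_def using I0sub finI0 by (simp add: card_Diff_subset)
    have lenJ: "length J = c - q" unfolding J_def tl_of_def using cardK finK by simp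
    have setJ: "set J = (nth ts) ` K" unfolding J_def using set_tl[OF finK, of ts] by simp
    have Jnz: "\<forall>b\<in>set J. b \<noteq> 0" using setJ Ksub ts(3) by auto
    have P0: "P \<noteq> 0" unfolding P_def using Jnz by (auto simp: prod_list_zero_iff)
    have I0' : "I0 \<in> Iset (length ts) q" using I0 kc by simp
    define L where "L = tl_of ts I0 @ J"
    have lenL: "length L = c" unfolding L_def using len_tl[OF I0', of ts] lenJ assms(5) by simp
    have setI0: "set (tl_of ts I0) = (nth ts) ` I0" using set_tl[OF finI0, of ts] by simp
    have inj: "inj_on (nth ts) {..<length ts}" using ts(2) by (auto intro!: inj_on_nth)
    have disj: "(nth ts) ` I0 \<inter> (nth ts) ` K = {}"
    proof -
      have "(nth ts) ` I0 \<inter> (nth ts) ` K = (nth ts) ` (I0 \<inter> K)"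
        using inj I0sub' Ksub by (intro inj_on_image_Int[symmetric]) auto
      also have "I0 \<inter> K = {}" unfolding K_def by auto
      finally show ?thesis by simp
    qed
    have distL: "distinct L" unfolding L_def distinct_append
      using distinct_tl[OF ts(2) I0sub'] distinct_tl[OF ts(2) Ksub] disj setI0 setJ unfolding J_def by auto
    have setL: "set L = set ts"
    proof -
      have "set L = (nth ts) ` (I0 \<union> K)" unfolding L_def using setI0 setJ by auto
      also have "I0 \<union> K = {..<length ts}" unfolding K_def using I0sub kc by auto
      also have "(nth ts) ` {..<length ts} = set ts" by (auto simp: in_set_conv_nth)
      finally show ?thesis .
    qed
    have perm: "(\<forall>x. G x L - G x ts \<in> Z c) \<or> (\<forall>x. G x L + G x ts \<in> Z c)"
      by (rule Lperm[OF lenL kc distL ts(2) setL])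
    have other: "G x (tl_of ts I @ J) \<in> Z c" if I: "I \<in> Iset c q" "I \<noteq> I0" for I x
    proof -
      have Is: "I \<subseteq> {..<c}" "card I = q" using I unfolding Iset_def by auto
      have finI: "finite I" using Is finite_subset by blast
      have "\<not> I \<subseteq> I0"
      proof
        assume "I \<subseteq> I0"
        then have "I = I0" using card_subset_eq[OF finI0] Is I0sub by metis
        then show False using I by simp
      qed
      then obtain i where i: "i \<in> I" "i \<notin> I0" by blast
      have iK: "i \<in> K" unfolding K_def using i Is by auto
      have "ts ! i \<in> set (tl_of ts I)" using set_tl[OF finI, of ts] i by simp
      moreover have "ts ! i \<in> set J" using setJ iK by simp
      ultimately have nd: "\<not> distinct (tl_of ts I @ J)" by auto
      have "length (tl_of ts I @ J) = c" using len_tl[OF I(1), of ts] lenJ assms(5) by simp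
      then show ?thesis using Lnd nd by blast
    qed
    have wsum: "fs_lin (psi a J) (Csum ts q f) - G (a * f I0 / P) L \<in> Z c" for a
    proof -
      have "fs_lin (psi a J) (Csum ts q f) = (\<Sum>I\<in>Iset (length ts) q. fs_lin (psi a J) (G (f I) (tl_of ts I)))"
        unfolding Csum_def by (rule fs_lin_sum[OF finite_Iset fin_gen])
      also have "\<dots> = (\<Sum>I\<in>Iset c q. G (a * f I / P) (tl_of ts I @ J))"
        unfolding fs_lin_gen psi_app P_def kc ..
      also have "\<dots> = G (a * f I0 / P) (tl_of ts I0 @ J) + (\<Sum>I\<in>Iset c q - {I0}. G (a * f I / P) (tl_of ts I @ J))"
        by (rule sum.remove[OF finite_Iset I0(1)])
      finally have e: "fs_lin (psi a J) (Csum ts q f) - G (a * f I0 / P) L = (\<Sum>I\<in>Iset c q - {I0}. G (a * f I / P) (tl_of ts I @ J))"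
        unfolding L_def by (simp only: add_diff_cancel_left')
      show ?thesis unfolding e by (rule zspan_sum) (use other in blast)
    qed
    have wa: "wedge_dlog a \<alpha> J - G (a * f I0 / P) L \<in> Z c" for a
    proof -
      have finA: "fin \<alpha>" by (rule Form_fin[OF assms(6)])
      have finC: "fin (Csum ts q f)" unfolding Csum_def by (rule fin_sum) (rule fin_gen)
      have "fs_lin (psi a J) (\<alpha> - Csum ts q f) \<in> Z c" by (rule wedge_Z[OF lenJ assms(5) f])
      then have d: "fs_lin (psi a J) \<alpha> - fs_lin (psi a J) (Csum ts q f) \<in> Z c"
        by (simp only: fs_lin_diff[OF finA finC])
      have e: "wedge_dlog a \<alpha> J - G (a * f I0 / P) L = (fs_lin (psi a J) \<alpha> - fs_lin (psi a J) (Csum ts q f)) + (fs_lin (psi a J) (Csum ts q f) - G (a * f I0 / P) L)"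
        unfolding wedge_psi by simp
      show ?thesis unfolding e by (rule zspan_add'[OF d wsum])
    qed
    have Hw: "H_zero p c (wedge_dlog a \<alpha> J)" for a using assms(7) lenJ Jnz by blast
    have Hg: "H_zero p c (G g ts)" for g
    proof -
      from perm show ?thesis
      proof
        assume A: "\<forall>x. G x L - G x ts \<in> Z c"
        define a where "a = g * P / f I0"
        have ea: "a * f I0 / P = g" using P0 I0(2) by (simp add: a_def)
        have e: "G g ts - wedge_dlog a \<alpha> J = - ((wedge_dlog a \<alpha> J - G (a * f I0 / P) L) + (G g L - G g ts))"
          unfolding ea by simp
        have "G g ts - wedge_dlog a \<alpha> J \<in> Z c" unfolding e
          by (rule zspan_neg'[OF zspan_add'[OF wa A[rule_format]]])
        then show ?thesis using H_zero_eq Hw by blast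
      next
        assume A: "\<forall>x. G x L + G x ts \<in> Z c"
        define a where "a = - g * P / f I0"
        have ea: "a * f I0 / P = - g" using P0 I0(2) by (simp add: a_def)
        have e: "G g ts - wedge_dlog a \<alpha> J = (G (-g) ts + G g ts) - ((wedge_dlog a \<alpha> J - G (a * f I0 / P) L) + (G (-g) L + G (-g) ts))"
          unfolding ea by simp
        have "G g ts - wedge_dlog a \<alpha> J \<in> Z c" unfolding e
          by (rule zspan_diff[OF Lneg[OF kc] zspan_add'[OF wa A[rule_format]]])
        then show ?thesis using H_zero_eq Hw by blast
      qed
    qed
    obtain g where "\<omega>0 - G g ts \<in> Z c" using top_collapse[OF ts(2) kc w0W] by blast
    then have "H_zero p c \<omega>0" using H_zero_eq Hg by blast
    then show ?thesis using w0(2) by simp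
  qed
qed


end
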